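(* Let $f\in C(\mathbb{R};\mathbb{R})$ satisfy $f(0)=0$ and $xf(x)>0$ for all $x\neq 0$, and let $g\in C([0,\infty);\mathbb{R})$ with $g\in L^1(0,\infty)$. Then every continuous solution $x$ of \[ x'(t)=-f(x(t))+g(t),\quad t>0;\qquad x(0)=\xi\in\mathbb{R}, \] satisfies $\lim_{t\to\infty}x(t)=0$.
   Context: Solutions are understood to be global continuous solutions on $[0,\infty)$ (the sign condition on $f$ ensures no blow-up in finite time). *)

theory Defs
  imports "HOL-Analysis.Analysis"
begin

end

theory Submission
  imports Defs "HOL-Analysis.Analysis"
begin

lemma barrier:
  fixes \<phi> \<phi>' :: "real \<Rightarrow> real" and a b :: real
  assumes ab: "a \<le> b" and cont: "continuous_on {a..b} \<phi>"
    and der: "\<And>t. a < t \<Longrightarrow> t < b \<Longrightarrow> (\<phi> has_real_derivative \<phi>' t) (at t)"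
    and neg: "\<And>t. a < t \<Longrightarrow> t < b \<Longrightarrow> \<phi> t > 0 \<Longrightarrow> \<phi>' t \<le> 0"
    and init: "\<phi> a \<le> 0"
  shows "\<phi> b \<le> 0"
proof -
  define Z where "Z = {a..b} \<inter> \<phi> -` {..0}"
  have "closed Z" unfolding Z_def
    by (rule continuous_closed_preimage[OF cont]) auto
  moreover have "bounded Z" unfolding Z_def by (rule bounded_subset[of "{a..b}"]) auto
  ultimately have "compact Z" using compact_eq_bounded_closed by blast
  moreover have "a \<in> Z" using ab init unfolding Z_def by auto
  ultimately obtain s where sZ: "s \<in> Z" and smax: "\<And>t. t \<in> Z \<Longrightarrow> t \<le> s"
    using compact_attains_sup[of Z] by blast
  have s: "a \<le> s" "s \<le> b" "\<phi> s \<le> 0" using sZ unfolding Z_def by auto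
  have pos: "\<phi> t > 0" if "s < t" "t \<le> b" for t
  proof (rule ccontr)
    assume "\<not> \<phi> t > 0"
    then have "t \<in> Z" using that s unfolding Z_def by auto
    then show False using smax that by fastforce
  qed
  have "\<phi> b \<le> \<phi> s"
  proof (rule DERIV_nonpos_imp_decreasing_open[OF s(2)])
    fix t assume "s < t" "t < b"
    then show "\<exists>y. (\<phi> has_real_derivative y) (at t) \<and> y \<le> 0"
      using der neg pos s by (intro exI[of _ "\<phi>' t"]) auto
  next
    show "continuous_on {s..b} \<phi>" by (rule continuous_on_subset[OF cont]) (use s in auto)
  qed
  with s show ?thesis by linarith
qed

locale ode =
  fixes f g x :: "real \<Rightarrow> real"
  assumes f_cont: "continuous_on UNIV f"
    and f_sign: "\<And>y. y \<noteq> 0 \<Longrightarrow> y * f y > 0"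
    and g_cont: "continuous_on {0..} g"
    and g_L1: "g absolutely_integrable_on {0..}"
    and x_cont: "continuous_on {0..} x"
    and x_ode: "\<And>t. t > 0 \<Longrightarrow> (x has_real_derivative (- f (x t) + g t)) (at t)"
begin

lemma neg: "ode (\<lambda>y. - f (- y)) (\<lambda>t. - g t) (\<lambda>t. - x t)"
proof
  show "continuous_on UNIV (\<lambda>y. - f (- y))"
    by (intro continuous_intros continuous_on_compose2[OF f_cont]) auto
  show "y * - f (- y) > 0" if "y \<noteq> 0" for y
    using f_sign[of "-y"] that by simp
  show "continuous_on {0..} (\<lambda>t. - g t)" using g_cont by (intro continuous_intros)
  show "(\<lambda>t. - g t) absolutely_integrable_on {0..}" using g_L1
    by (auto simp: absolutely_integrable_on_def intro: integrable_neg)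
  show "continuous_on {0..} (\<lambda>t. - x t)" using x_cont by (intro continuous_intros)
  show "((\<lambda>t. - x t) has_real_derivative - (- f (- (- x t))) + - g t) (at t)" if "t > 0" for t
    using DERIV_minus[OF x_ode[OF that]] by simp
qed

lemma absg_int: "(\<lambda>s. \<bar>g s\<bar>) integrable_on {0..}"
  using g_L1 unfolding absolutely_integrable_on_def by simp

lemma absg_int_sub: "(\<lambda>s. \<bar>g s\<bar>) integrable_on {a..b}" if "0 \<le> a" for a b
  by (rule integrable_on_subinterval[OF absg_int]) (use that in auto)

lemma g_int_sub: "g integrable_on {a..b}" if "0 \<le> a" for a b
  by (rule integrable_on_subinterval[OF set_lebesgue_integral_eq_integral(1)[OF g_L1]]) (use that in auto)

lemma A_mono: "integral {0..s} (\<lambda>s. \<bar>g s\<bar>) \<le> integral {0..t} (\<lambda>s. \<bar>g s\<bar>)" if "s \<le> t" for s t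
  by (rule integral_subset_le) (use that absg_int_sub in auto)

lemma A_le: "integral {0..t} (\<lambda>s. \<bar>g s\<bar>) \<le> integral {0..} (\<lambda>s. \<bar>g s\<bar>)"
  by (rule integral_subset_le) (use absg_int_sub absg_int in auto)

lemma G_bound: "\<bar>integral {0..t} g\<bar> \<le> integral {0..} (\<lambda>s. \<bar>g s\<bar>)"
proof -
  have "norm (integral {0..t} g) \<le> integral {0..t} (\<lambda>s. \<bar>g s\<bar>)"
    by (rule integral_norm_bound_integral) (use g_int_sub absg_int_sub in auto)
  then show ?thesis using A_le[of t] by simp
qed

lemma int_deriv:
  assumes hc: "continuous_on {0..} h" and t: "t > 0"
  shows "((\<lambda>u. integral {0..u} h) has_real_derivative h t) (at t)"
proof -
  have "continuous_on {0..t+1} h" by (rule continuous_on_subset[OF hc]) auto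
  from integral_has_real_derivative[OF this, of t] t
  show ?thesis by (simp add: at_within_Icc_at)
qed

lemma int_cont:
  fixes h :: "real \<Rightarrow> real"
  assumes hc: "continuous_on {0..} h"
  shows "continuous_on {0..b} (\<lambda>u. integral {0..u} h)"
proof -
  have c: "continuous_on {0..b} h" by (rule continuous_on_subset[OF hc]) auto
  show ?thesis
    unfolding continuous_on_eq_continuous_within
    using integral_has_real_derivative[OF c] DERIV_continuous by blast
qed

lemma upper:
  assumes t0: "0 \<le> t0" and tt: "t0 \<le> t" and c: "0 \<le> c" and init: "x t0 \<le> c"
  shows "x t \<le> c + (integral {0..t} (\<lambda>s. \<bar>g s\<bar>) - integral {0..t0} (\<lambda>s. \<bar>g s\<bar>))"
proof -
  define A where "A = (\<lambda>u. integral {0..u} (\<lambda>s. \<bar>g s\<bar>))"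
  have gc: "continuous_on {0..} (\<lambda>s. \<bar>g s\<bar>)" using g_cont by (intro continuous_intros)
  have "(\<lambda>u. x u - c - (A u - A t0)) t \<le> 0"
  proof (rule barrier[OF tt, where \<phi>' = "\<lambda>u. - f (x u) + g u - \<bar>g u\<bar>"])
    have "continuous_on {t0..t} x" by (rule continuous_on_subset[OF x_cont]) (use t0 in auto)
    moreover have "continuous_on {t0..t} A" unfolding A_def
      by (rule continuous_on_subset[OF int_cont[OF gc, of t]]) (use t0 in auto)
    ultimately show "continuous_on {t0..t} (\<lambda>u. x u - c - (A u - A t0))"
      by (intro continuous_intros)
  next
    fix u assume "t0 < u" "u < t"
    then have u: "u > 0" using t0 by linarith
    show "((\<lambda>u. x u - c - (A u - A t0)) has_real_derivative - f (x u) + g u - \<bar>g u\<bar>) (at u)"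
      unfolding A_def
      using x_ode[OF u] int_deriv[OF gc u] by (auto intro!: derivative_eq_intros)
  next
    fix u assume "t0 < u" "u < t" "0 < x u - c - (A u - A t0)"
    moreover have "A t0 \<le> A u" unfolding A_def using A_mono \<open>t0 < u\<close> by simp
    ultimately have "x u > 0" using c by linarith
    then have "f (x u) > 0" using f_sign[of "x u"] by (simp add: zero_less_mult_iff)
    then show "- f (x u) + g u - \<bar>g u\<bar> \<le> 0" by linarith
  next
    show "x t0 - c - (A t0 - A t0) \<le> 0" using init by simp
  qed
  then show ?thesis unfolding A_def by simp
qed

lemma escape:
  assumes T: "T > 0" and e: "e > 0" and above: "\<And>t. t \<ge> T \<Longrightarrow> x t \<ge> e"
    and bound: "\<And>t. t \<ge> 0 \<Longrightarrow> x t \<le> B"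
  shows False
proof -
  define M where "M = integral {0..} (\<lambda>s. \<bar>g s\<bar>)"
  define G where "G = (\<lambda>u. integral {0..u} g)"
  have GM: "\<bar>G u\<bar> \<le> M" for u unfolding G_def M_def by (rule G_bound)
  have eB: "e \<le> B" using above[of T] bound[of T] T by auto
  obtain y0 where y0: "y0 \<in> {e..B}" and ymin: "\<And>y. y \<in> {e..B} \<Longrightarrow> f y0 \<le> f y"
    using continuous_attains_inf[of "{e..B}" f] continuous_on_subset[OF f_cont] eB by auto
  define m where "m = f y0"
  have "y0 > 0" using y0 e by auto
  then have m: "m > 0" unfolding m_def using f_sign[of y0] by (simp add: zero_less_mult_iff)
  define t where "t = T + (B + 2 * M) / m + 1"
  have M0: "M \<ge> 0" using GM[of 0] by linarith
  have B0: "B \<ge> 0" using eB e by linarith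
  have tT: "T \<le> t" unfolding t_def using m M0 B0 by (simp add: field_simps)
  have "(\<lambda>u. x u + m * u - G u) t \<le> (\<lambda>u. x u + m * u - G u) T"
  proof (rule DERIV_nonpos_imp_nonincreasing[OF tT])
    fix u assume u1: "T \<le> u" and u2: "u \<le> t"
    note u = u1 u2
    then have u0: "u > 0" using T by linarith
    have "x u \<in> {e..B}" using above[of u] bound[of u] u u0 by auto
    then have "m \<le> f (x u)" unfolding m_def by (rule ymin)
    moreover have "((\<lambda>u. x u + m * u - G u) has_real_derivative - f (x u) + g u + m - g u) (at u)"
      unfolding G_def using x_ode[OF u0] int_deriv[OF g_cont u0]
      by (auto intro!: derivative_eq_intros)
    ultimately show "\<exists>y. ((\<lambda>u. x u + m * u - G u) has_real_derivative y) (at u) \<and> y \<le> 0"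
      by (intro exI[of _ "- f (x u) + g u + m - g u"]) auto
  qed
  then have "x t \<le> x T + m * (T - t) + G t - G T" by (simp add: algebra_simps)
  also have "\<dots> \<le> B + m * (T - t) + 2 * M" using bound[of T] T GM[of t] GM[of T] by auto
  also have "m * (T - t) = - (B + 2 * M) - m" unfolding t_def using m by (simp add: field_simps)
  finally have "x t \<le> - m" by simp
  with above[OF tT] e m show False by linarith
qed

end

lemma (in ode) abs_bound:
  assumes t0: "0 \<le> t0" and tt: "t0 \<le> t" and c: "0 \<le> c" and init: "\<bar>x t0\<bar> \<le> c"
  shows "\<bar>x t\<bar> \<le> c + (integral {0..t} (\<lambda>s. \<bar>g s\<bar>) - integral {0..t0} (\<lambda>s. \<bar>g s\<bar>))"
proof -
  interpret n: ode "\<lambda>y. - f (- y)" "\<lambda>t. - g t" "\<lambda>t. - x t" by (rule neg)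
  have "x t \<le> c + (integral {0..t} (\<lambda>s. \<bar>g s\<bar>) - integral {0..t0} (\<lambda>s. \<bar>g s\<bar>))"
    by (rule upper) (use assms in auto)
  moreover have "- x t \<le> c + (integral {0..t} (\<lambda>s. \<bar>g s\<bar>) - integral {0..t0} (\<lambda>s. \<bar>g s\<bar>))"
    using n.upper[OF t0 tt c] init by simp
  ultimately show ?thesis by linarith
qed

lemma (in ode) tail:
  assumes e: "e > 0"
  shows "\<exists>T\<ge>1. \<forall>t0 t. T \<le> t0 \<longrightarrow> t0 \<le> t \<longrightarrow>
     integral {0..t} (\<lambda>s. \<bar>g s\<bar>) - integral {0..t0} (\<lambda>s. \<bar>g s\<bar>) < e"
proof -
  define A where "A = (\<lambda>u. integral {0..u} (\<lambda>s. \<bar>g s\<bar>))"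
  define S where "S = (SUP u\<in>{0..}. A u)"
  have bdd: "bdd_above (A ` {0..})" unfolding A_def using A_le by (intro bdd_aboveI) auto
  have "S - e < S" using e by simp
  then obtain T0 where T0: "T0 \<in> {0..}" "S - e < A T0"
    unfolding S_def using less_cSUP_iff[OF _ bdd] by blast
  show ?thesis
  proof (intro exI[of _ "max T0 1"] conjI allI impI)
    fix t0 t assume h: "max T0 1 \<le> t0" "t0 \<le> t"
    have "A t \<le> S" unfolding S_def using h T0 by (intro cSUP_upper[OF _ bdd]) auto
    moreover have "A T0 \<le> A t0" unfolding A_def using A_mono h by simp
    ultimately show "integral {0..t} (\<lambda>s. \<bar>g s\<bar>) - integral {0..t0} (\<lambda>s. \<bar>g s\<bar>) < e"
      using T0 unfolding A_def by linarith
  qed simp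
qed

lemma (in ode) limit: "(x \<longlongrightarrow> 0) at_top"
proof (rule tendstoI)
  fix e :: real assume e: "e > 0"
  interpret n: ode "\<lambda>y. - f (- y)" "\<lambda>t. - g t" "\<lambda>t. - x t" by (rule neg)
  define c where "c = e / 3"
  have c: "c > 0" unfolding c_def using e by simp
  define L where "L = integral {0..} (\<lambda>s. \<bar>g s\<bar>)"
  define B where "B = \<bar>x 0\<bar> + L"
  have xB: "\<bar>x t\<bar> \<le> B" if "t \<ge> 0" for t
    using abs_bound[of 0 t "\<bar>x 0\<bar>"] that A_le[of t] unfolding B_def L_def by simp
  obtain T where T1: "T \<ge> 1" and TT: "\<And>t0 t. T \<le> t0 \<Longrightarrow> t0 \<le> t \<Longrightarrow>
     integral {0..t} (\<lambda>s. \<bar>g s\<bar>) - integral {0..t0} (\<lambda>s. \<bar>g s\<bar>) < c"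
    using tail[OF c] by blast
  have "\<exists>t0\<ge>T. \<bar>x t0\<bar> < c"
  proof (rule ccontr)
    assume "\<not> ?thesis"
    then have big: "\<And>t. t \<ge> T \<Longrightarrow> \<bar>x t\<bar> \<ge> c" by force
    have nozero: False if hh: "t \<ge> T" "x t \<le> 0" "0 \<le> x T" for t
    proof -
      have "continuous_on {T..t} x" by (rule continuous_on_subset[OF x_cont]) (use T1 hh in auto)
      then obtain z where "T \<le> z" "z \<le> t" "x z = 0" using IVT2'[of x t 0 T] hh by auto
      then show False using big[of z] c by auto
    qed
    have nozero': False if hh: "t \<ge> T" "x t \<ge> 0" "x T \<le> 0" for t
    proof -
      have "continuous_on {T..t} x" by (rule continuous_on_subset[OF x_cont]) (use T1 hh in auto)
      then obtain z where "T \<le> z" "z \<le> t" "x z = 0" using IVT'[of x T 0 t] hh by auto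
      then show False using big[of z] c by auto
    qed
    show False
    proof (cases "x T \<ge> 0")
      case True
      have "x t \<ge> c" if "t \<ge> T" for t
        using big[OF that] nozero[OF that _ True] by (cases "x t \<le> 0") auto
      then show False using escape[of T c B] T1 c xB by fastforce
    next
      case False
      have "- x t \<ge> c" if "t \<ge> T" for t
        using big[OF that] nozero'[OF that] False by (cases "x t \<ge> 0") auto
      then show False using n.escape[of T c B] T1 c xB by fastforce
    qed
  qed
  then obtain t0 where t0: "t0 \<ge> T" "\<bar>x t0\<bar> < c" by blast
  show "\<forall>\<^sub>F t in at_top. dist (x t) 0 < e"
    unfolding eventually_at_top_linorder
  proof (intro exI[of _ t0] allI impI)
    fix t assume "t \<ge> t0"
    then have "\<bar>x t\<bar> \<le> c + (integral {0..t} (\<lambda>s. \<bar>g s\<bar>) - integral {0..t0} (\<lambda>s. \<bar>g s\<bar>))"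
      using abs_bound[of t0 t c] t0 T1 c by auto
    also have "\<dots> < 2 * c" using TT[of t0 t] t0 \<open>t \<ge> t0\<close> by simp
    finally show "dist (x t) 0 < e" unfolding c_def using e by simp
  qed
qed

theorem proposition1:
  fixes f g x :: "real \<Rightarrow> real" and \<xi> :: real
  assumes f_cont: "continuous_on UNIV f"
    and f_zero: "f 0 = 0"
    and f_sign: "\<And>y. y \<noteq> 0 \<Longrightarrow> y * f y > 0"
    and g_cont: "continuous_on {0..} g"
    and g_L1: "g absolutely_integrable_on {0..}"
    and x_cont: "continuous_on {0..} x"
    and x_init: "x 0 = \<xi>"
    and x_ode: "\<And>t. t > 0 \<Longrightarrow> (x has_real_derivative (- f (x t) + g t)) (at t)"
  shows "(x \<longlongrightarrow> 0) at_top"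
proof -
  interpret ode f g x using assms by unfold_locales auto
  show ?thesis by (rule limit)
qed

end
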